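(* In the three-agent investor/hedge-fund setting with restricted reports, fix the investor's report $\tilde m$. Then the unique Nash equilibrium between the two hedge funds (each choosing its report to maximize its own utility given the other's report) is $$M'_{12}=M'_{13}=\frac{c}{1-s}=\frac{a\nu-\tilde m(1-\nu)(\nu-\eta)}{\nu+(1-\nu)(\nu-\eta)},$$ where $c=\frac{a\nu-\tilde\alpha(1-\nu)}{\nu(2-\nu)}$, $s=\frac{\eta(1-\nu)}{\nu(2-\nu)}$ and $\tilde\alpha=\tilde m/(2+\rho)$.
   Context: Three agents: agent 1 (investor), agents 2 and 3 (hedge funds). Parameters $m,a\in\mathbb{R}$ and $\rho\in(-1,1)$; true beliefs $M=\begin{pmatrix}0&a&a\\ m&0&0\\ m&0&0\end{pmatrix}$ (column $i$ is agent $i$'s true belief vector $\mu_i$), $\Sigma=\begin{pmatrix}1&0&0\\0&1&\rho\\0&\rho&1\end{pmatrix}$, $\Gamma=I_3$. Restricted reports: the investor reports a common value $\tilde m$ for $M'_{21}=M'_{31}$, fund 2 reports $M'_{12}=\tilde a$, fund 3 reports $M'_{13}=\tilde b$, and all other entries of $M'$ equal the true value $0$. The stable point for $M'$ is the unique $(W,P)$ with $W=W^T$, $P^T=-P$ and $M'-P=2\Sigma W\Gamma$. Agent $i$'s utility is $g_i=w_i^T(\mu_i-Pe_i)-w_i^T\Sigma w_i$, $w_i=We_i$. Define $\nu=\tfrac12\big(\tfrac1{2-\rho}+\tfrac1{2+\rho}\big)$ and $\eta=\tfrac12\big(\tfrac1{2-\rho}-\tfrac1{2+\rho}\big)$. 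*)

theory Defs
  imports "HOL-Analysis.Analysis"
begin

text \<open>Matrices are real^3^3; A $ i $ j is row i, column j; agents are indices 1,2,3.
  Column i of a belief matrix is agent i's belief vector.\<close>

definition SigmaM :: "real \<Rightarrow> real^3^3" where
  "SigmaM \<rho> = vector [vector [1, 0, 0], vector [0, 1, \<rho>], vector [0, \<rho>, 1]]"

definition GammaM :: "real^3^3" where
  "GammaM = mat 1"

definition Mtrue :: "real \<Rightarrow> real \<Rightarrow> real^3^3" where
  "Mtrue m a = vector [vector [0, a, a], vector [m, 0, 0], vector [m, 0, 0]]"

text \<open>Restricted reported matrix M': investor reports mt for entries (2,1),(3,1);
  fund 2 reports r2 for entry (1,2); fund 3 reports r3 for entry (1,3); rest true (0).\<close>
definition Mrep :: "real \<Rightarrow> real \<Rightarrow> real \<Rightarrow> real^3^3" where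
  "Mrep mt r2 r3 = vector [vector [0, r2, r3], vector [mt, 0, 0], vector [mt, 0, 0]]"

definition is_stable :: "real^3^3 \<Rightarrow> real^3^3 \<Rightarrow> real^3^3 \<Rightarrow> real^3^3 \<Rightarrow> real^3^3 \<Rightarrow> bool" where
  "is_stable Sig Gam M' W P \<longleftrightarrow>
     transpose W = W \<and> transpose P = - P \<and> M' - P = 2 *\<^sub>R (Sig ** W ** Gam)"

definition stable_point :: "real \<Rightarrow> real^3^3 \<Rightarrow> (real^3^3) \<times> (real^3^3)" where
  "stable_point \<rho> M' = (THE (W, P). is_stable (SigmaM \<rho>) GammaM M' W P)"

definition util :: "real \<Rightarrow> real^3^3 \<Rightarrow> real^3^3 \<Rightarrow> 3 \<Rightarrow> real" where
  "util \<rho> M M' i =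
     (let (W, P) = stable_point \<rho> M';
          w = W *v axis i 1;
          \<mu> = M *v axis i 1
      in w \<bullet> (\<mu> - P *v axis i 1) - w \<bullet> (SigmaM \<rho> *v w))"

definition is_funds_NE :: "real \<Rightarrow> real \<Rightarrow> real \<Rightarrow> real \<Rightarrow> real \<Rightarrow> real \<Rightarrow> bool" where
  "is_funds_NE m a \<rho> mt r2 r3 \<longleftrightarrow>
     (\<forall>x. util \<rho> (Mtrue m a) (Mrep mt x r3) 2 \<le> util \<rho> (Mtrue m a) (Mrep mt r2 r3) 2) \<and>
     (\<forall>y. util \<rho> (Mtrue m a) (Mrep mt r2 y) 3 \<le> util \<rho> (Mtrue m a) (Mrep mt r2 r3) 3)"

definition nuC :: "real \<Rightarrow> real" where
  "nuC \<rho> = (1/(2 - \<rho>) + 1/(2 + \<rho>)) / 2"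

definition etaC :: "real \<Rightarrow> real" where
  "etaC \<rho> = (1/(2 - \<rho>) - 1/(2 + \<rho>)) / 2"

end

theory Submission
  imports Defs
begin

definition UU :: "real \<Rightarrow> real \<Rightarrow> real \<Rightarrow> real \<Rightarrow> real" where
  "UU \<rho> mt r2 r3 = (2*(mt+r2) - \<rho>*(mt+r3)) / (4 - \<rho>^2)"

definition W0 :: "real \<Rightarrow> real \<Rightarrow> real \<Rightarrow> real \<Rightarrow> real^3^3" where
  "W0 \<rho> mt r2 r3 = (let u = UU \<rho> mt r2 r3; v = UU \<rho> mt r3 r2 in
     vector [vector [0, u/2, v/2], vector [u/2, 0, 0], vector [v/2, 0, 0]])"

definition P0 :: "real \<Rightarrow> real \<Rightarrow> real \<Rightarrow> real \<Rightarrow> real^3^3" where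
  "P0 \<rho> mt r2 r3 = (let u = UU \<rho> mt r2 r3; v = UU \<rho> mt r3 r2 in
     vector [vector [0, r2 - u, r3 - v], vector [-(r2-u), 0, 0], vector [-(r3-v), 0, 0]])"

lemma stable_expand:
  "is_stable (SigmaM \<rho>) GammaM (Mrep mt r2 r3) W P \<longleftrightarrow> ((W $ 2 $ 1 = W $ 1 $ 2) \<and>
      (W $ 3 $ 1 = W $ 1 $ 3) \<and>
      (W $ 1 $ 2 = W $ 2 $ 1) \<and>
      (W $ 3 $ 2 = W $ 2 $ 3) \<and>
      (W $ 1 $ 3 = W $ 3 $ 1) \<and>
      (W $ 2 $ 3 = W $ 3 $ 2) \<and>
      (P $ 1 $ 1 = 0) \<and>
      (P $ 2 $ 1 = - P $ 1 $ 2) \<and>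
      (P $ 3 $ 1 = - P $ 1 $ 3) \<and>
      (P $ 1 $ 2 = - P $ 2 $ 1) \<and>
      (P $ 2 $ 2 = 0) \<and>
      (P $ 3 $ 2 = - P $ 2 $ 3) \<and>
      (P $ 1 $ 3 = - P $ 3 $ 1) \<and>
      (P $ 2 $ 3 = - P $ 3 $ 2) \<and>
      (P $ 3 $ 3 = 0) \<and>
      (- P $ 1 $ 1 = 2 * W $ 1 $ 1) \<and>
      (r2 - P $ 1 $ 2 = 2 * W $ 1 $ 2) \<and>
      (r3 - P $ 1 $ 3 = 2 * W $ 1 $ 3) \<and>
      (mt - P $ 2 $ 1 = 2 * W $ 2 $ 1 + 2 * (\<rho> * W $ 3 $ 1)) \<and>
      (- P $ 2 $ 2 = 2 * W $ 2 $ 2 + 2 * (\<rho> * W $ 3 $ 2)) \<and>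
      (- P $ 2 $ 3 = 2 * W $ 2 $ 3 + 2 * (\<rho> * W $ 3 $ 3)) \<and>
      (mt - P $ 3 $ 1 = 2 * (\<rho> * W $ 2 $ 1) + 2 * W $ 3 $ 1) \<and>
      (- P $ 3 $ 2 = 2 * (\<rho> * W $ 2 $ 2) + 2 * W $ 3 $ 2) \<and>
      (- P $ 3 $ 3 = 2 * (\<rho> * W $ 2 $ 3) + 2 * W $ 3 $ 3))"
  unfolding is_stable_def SigmaM_def GammaM_def Mrep_def
  by (simp add: vec_eq_iff forall_3 matrix_matrix_mult_def sum_3 transpose_def mat_def)

lemma stable_unique:
  assumes r1: "\<rho>^2 < 1"
  and st: "is_stable (SigmaM \<rho>) GammaM (Mrep mt r2 r3) W P"
  shows "W = W0 \<rho> mt r2 r3 \<and> P = P0 \<rho> mt r2 r3"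
proof -
  have D: "4 - \<rho>^2 \<noteq> 0" using r1 by simp
  have E: "1 - \<rho>^2 \<noteq> 0" using r1 by simp
  have hc: "(W $ 2 $ 1 = W $ 1 $ 2) \<and>
      (W $ 3 $ 1 = W $ 1 $ 3) \<and>
      (W $ 1 $ 2 = W $ 2 $ 1) \<and>
      (W $ 3 $ 2 = W $ 2 $ 3) \<and>
      (W $ 1 $ 3 = W $ 3 $ 1) \<and>
      (W $ 2 $ 3 = W $ 3 $ 2) \<and>
      (P $ 1 $ 1 = 0) \<and>
      (P $ 2 $ 1 = - P $ 1 $ 2) \<and>
      (P $ 3 $ 1 = - P $ 1 $ 3) \<and>
      (P $ 1 $ 2 = - P $ 2 $ 1) \<and>
      (P $ 2 $ 2 = 0) \<and>
      (P $ 3 $ 2 = - P $ 2 $ 3) \<and>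
      (P $ 1 $ 3 = - P $ 3 $ 1) \<and>
      (P $ 2 $ 3 = - P $ 3 $ 2) \<and>
      (P $ 3 $ 3 = 0) \<and>
      (- P $ 1 $ 1 = 2 * W $ 1 $ 1) \<and>
      (r2 - P $ 1 $ 2 = 2 * W $ 1 $ 2) \<and>
      (r3 - P $ 1 $ 3 = 2 * W $ 1 $ 3) \<and>
      (mt - P $ 2 $ 1 = 2 * W $ 2 $ 1 + 2 * (\<rho> * W $ 3 $ 1)) \<and>
      (- P $ 2 $ 2 = 2 * W $ 2 $ 2 + 2 * (\<rho> * W $ 3 $ 2)) \<and>
      (- P $ 2 $ 3 = 2 * W $ 2 $ 3 + 2 * (\<rho> * W $ 3 $ 3)) \<and>
      (mt - P $ 3 $ 1 = 2 * (\<rho> * W $ 2 $ 1) + 2 * W $ 3 $ 1) \<and>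
      (- P $ 3 $ 2 = 2 * (\<rho> * W $ 2 $ 2) + 2 * W $ 3 $ 2) \<and>
      (- P $ 3 $ 3 = 2 * (\<rho> * W $ 2 $ 3) + 2 * W $ 3 $ 3)"
    using stable_expand[THEN iffD1, OF st] .
  have h: "W $ 2 $ 1 = W $ 1 $ 2" "W $ 3 $ 1 = W $ 1 $ 3" "W $ 1 $ 2 = W $ 2 $ 1" "W $ 3 $ 2 = W $ 2 $ 3" "W $ 1 $ 3 = W $ 3 $ 1" "W $ 2 $ 3 = W $ 3 $ 2" "P $ 1 $ 1 = 0" "P $ 2 $ 1 = - P $ 1 $ 2" "P $ 3 $ 1 = - P $ 1 $ 3" "P $ 1 $ 2 = - P $ 2 $ 1" "P $ 2 $ 2 = 0" "P $ 3 $ 2 = - P $ 2 $ 3" "P $ 1 $ 3 = - P $ 3 $ 1" "P $ 2 $ 3 = - P $ 3 $ 2" "P $ 3 $ 3 = 0" "- P $ 1 $ 1 = 2 * W $ 1 $ 1" "r2 - P $ 1 $ 2 = 2 * W $ 1 $ 2" "r3 - P $ 1 $ 3 = 2 * W $ 1 $ 3" "mt - P $ 2 $ 1 = 2 * W $ 2 $ 1 + 2 * (\<rho> * W $ 3 $ 1)" "- P $ 2 $ 2 = 2 * W $ 2 $ 2 + 2 * (\<rho> * W $ 3 $ 2)" "- P $ 2 $ 3 = 2 * W $ 2 $ 3 + 2 * (\<rho> * W $ 3 $ 3)" "mt - P $ 3 $ 1 = 2 * (\<rho> * W $ 2 $ 1) + 2 * W $ 3 $ 1" "- P $ 3 $ 2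 = 2 * (\<rho> * W $ 2 $ 2) + 2 * W $ 3 $ 2" "- P $ 3 $ 3 = 2 * (\<rho> * W $ 2 $ 3) + 2 * W $ 3 $ 3"
    using hc by - (elim conjE, assumption)+
    have w11: "W$1$1 = 0" using h(16,7) by simp
    have p12: "P$1$2 = r2 - 2 * W$1$2" using h(17) by simp
    have p13: "P$1$3 = r3 - 2 * W$1$3" using h(18) by simp
    have w22: "W$2$2 = - \<rho> * W$2$3" using h(20,11,4) by simp
    have w33: "W$3$3 = - \<rho> * W$2$3" using h(24,15) by simp
    have t1: "- P$2$3 = 2 * W$2$3 * (1 - \<rho>^2)" using h(21) w33 by (simp add: power2_eq_square algebra_simps)
    have t2: "P$2$3 = 2 * W$2$3 * (1 - \<rho>^2)" using h(23) h(12) h(4) w22 by (simp add: power2_eq_square algebra_simps)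
    have w23: "W$2$3 = 0" using t1 t2 E by simp
    have p23: "P$2$3 = 0" using t2 w23 by simp
    have e1: "mt + r2 - 2 * W$1$2 = 2 * W$1$2 + 2 * \<rho> * W$1$3" using h(19,8,1,2) p12 by simp
    have e2: "mt + r3 - 2 * W$1$3 = 2 * \<rho> * W$1$2 + 2 * W$1$3" using h(22,9,1,2) p13 by simp
    have a1: "4*W$1$2 + 2*\<rho>*W$1$3 = mt + r2" using e1 by linarith
    have a2: "2*\<rho>*W$1$2 + 4*W$1$3 = mt + r3" using e2 by linarith
    have u: "W$1$2 = UU \<rho> mt r2 r3 / 2"
    proof -
      have "(4 - \<rho>^2) * (2 * W$1$2) = 2*(4*W$1$2 + 2*\<rho>*W$1$3) - \<rho>*(2*\<rho>*W$1$2 + 4*W$1$3)"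
        by (simp add: power2_eq_square algebra_simps)
      also have "\<dots> = 2*(mt+r2) - \<rho>*(mt+r3)" by (simp only: a1 a2)
      finally have "2 * W$1$2 = UU \<rho> mt r2 r3"
        unfolding UU_def using D by (simp add: eq_divide_eq mult.commute)
      thus ?thesis by simp
    qed
    have v: "W$1$3 = UU \<rho> mt r3 r2 / 2"
    proof -
      have "(4 - \<rho>^2) * (2 * W$1$3) = 2*(2*\<rho>*W$1$2 + 4*W$1$3) - \<rho>*(4*W$1$2 + 2*\<rho>*W$1$3)"
        by (simp add: power2_eq_square algebra_simps)
      also have "\<dots> = 2*(mt+r3) - \<rho>*(mt+r2)" by (simp only: a1 a2)
      finally have "2 * W$1$3 = UU \<rho> mt r3 r2"
        unfolding UU_def using D by (simp add: eq_divide_eq mult.commute)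
      thus ?thesis by simp
    qed
    show ?thesis unfolding W0_def P0_def Let_def
      using h(1,2,4,7,8,9,11,12,15) w11 p12 p13 w22 w33 w23 p23 u v by (simp add: vec_eq_iff forall_3)
qed

lemma UU_mul:
  assumes r1: "\<rho>^2 < 1"
  shows "(4 - \<rho>^2) * UU \<rho> mt r2 r3 = 2*(mt+r2) - \<rho>*(mt+r3)"
proof -
  have D: "4 - \<rho>^2 \<noteq> 0" using r1 by simp
  show ?thesis unfolding UU_def using D by simp
qed

lemma UU_eq:
  assumes r1: "\<rho>^2 < 1"
  shows "2 * UU \<rho> mt r2 r3 + \<rho> * UU \<rho> mt r3 r2 = mt + r2"
proof -
  have D: "4 - \<rho>^2 \<noteq> 0" using r1 by simp
  have "(4 - \<rho>^2) * (2 * UU \<rho> mt r2 r3 + \<rho> * UU \<rho> mt r3 r2)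
      = 2 * ((4 - \<rho>^2) * UU \<rho> mt r2 r3) + \<rho> * ((4 - \<rho>^2) * UU \<rho> mt r3 r2)"
    by (simp add: distrib_left mult.left_commute)
  also have "\<dots> = 2 * (2*(mt+r2) - \<rho>*(mt+r3)) + \<rho> * (2*(mt+r3) - \<rho>*(mt+r2))"
    by (simp only: UU_mul[OF r1])
  also have "\<dots> = (4 - \<rho>^2) * (mt + r2)"
    by (simp add: power2_eq_square algebra_simps)
  finally show ?thesis using D by simp
qed

lemma stable_W0:
  assumes r1: "\<rho>^2 < 1"
  shows "is_stable (SigmaM \<rho>) GammaM (Mrep mt r2 r3) (W0 \<rho> mt r2 r3) (P0 \<rho> mt r2 r3)"
proof -
  have D: "4 - \<rho>^2 \<noteq> 0" using r1 by simp
  show ?thesis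
  unfolding is_stable_def SigmaM_def GammaM_def Mrep_def W0_def P0_def Let_def
  using UU_eq[OF r1, of mt r2 r3] UU_eq[OF r1, of mt r3 r2]
  by (simp add: vec_eq_iff forall_3 matrix_matrix_mult_def sum_3 transpose_def mat_def algebra_simps)
qed

lemma stable_point_eq:
  assumes r1: "\<rho>^2 < 1"
  shows "stable_point \<rho> (Mrep mt r2 r3) = (W0 \<rho> mt r2 r3, P0 \<rho> mt r2 r3)"
  unfolding stable_point_def
proof (rule the_equality)
  show "case (W0 \<rho> mt r2 r3, P0 \<rho> mt r2 r3) of (W, P) \<Rightarrow> is_stable (SigmaM \<rho>) GammaM (Mrep mt r2 r3) W P"
    using stable_W0[OF r1] by simp
next
  fix p assume "case p of (W, P) \<Rightarrow> is_stable (SigmaM \<rho>) GammaM (Mrep mt r2 r3) W P"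
  then show "p = (W0 \<rho> mt r2 r3, P0 \<rho> mt r2 r3)"
    using stable_unique[OF r1] by (cases p) auto
qed

definition GG :: "real \<Rightarrow> real \<Rightarrow> real \<Rightarrow> real \<Rightarrow> real \<Rightarrow> real" where
  "GG \<rho> a mt s x = (let u = UU \<rho> mt x s in (u/2)*(a - x + u) - u^2/4)"

lemma util2:
  assumes r1: "\<rho>^2 < 1"
  shows "util \<rho> (Mtrue m a) (Mrep mt r2 r3) 2 = GG \<rho> a mt r3 r2"
  unfolding util_def stable_point_eq[OF r1] GG_def
  by (simp add: W0_def P0_def Mtrue_def SigmaM_def Let_def matrix_vector_mult_def sum_3
      inner_vec_def axis_def power2_eq_square algebra_simps) (simp add: field_simps)?

lemma util3:
  assumes r1: "\<rho>^2 < 1"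
  shows "util \<rho> (Mtrue m a) (Mrep mt r2 r3) 3 = GG \<rho> a mt r2 r3"
  unfolding util_def stable_point_eq[OF r1] GG_def
  by (simp add: W0_def P0_def Mtrue_def SigmaM_def Let_def matrix_vector_mult_def sum_3
      inner_vec_def axis_def power2_eq_square algebra_simps) (simp add: field_simps)?

lemma quad_max:
  fixes A B u0 :: real
  assumes A: "A > 0"
  shows "(\<forall>u. B*u - A*u^2 \<le> B*u0 - A*u0^2) \<longleftrightarrow> u0 = B/(2*A)"
proof
  assume h: "\<forall>u. B*u - A*u^2 \<le> B*u0 - A*u0^2"
  have "B*(B/(2*A)) - A*(B/(2*A))^2 \<le> B*u0 - A*u0^2" using h by blast
  hence "4*A*(B*(B/(2*A)) - A*(B/(2*A))^2) \<le> 4*A*(B*u0 - A*u0^2)"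
    using A by simp
  moreover have "4*A*(B*(B/(2*A)) - A*(B/(2*A))^2) = B^2"
    using A by (simp add: field_simps power2_eq_square)
  ultimately have "(2*A*u0 - B)^2 \<le> 0"
    by (simp add: power2_eq_square algebra_simps)
  hence "2*A*u0 - B = 0" by simp
  thus "u0 = B/(2*A)" using A by (simp add: field_simps)
next
  assume e: "u0 = B/(2*A)"
  hence B: "B = 2*A*u0" using A by (simp add: field_simps)
  show "\<forall>u. B*u - A*u^2 \<le> B*u0 - A*u0^2"
  proof
    fix u
    have "B*u0 - A*u0^2 - (B*u - A*u^2) = A*(u - u0)^2"
      unfolding B by (simp add: power2_eq_square algebra_simps)
    moreover have "A*(u - u0)^2 \<ge> 0" using A by simp
    ultimately show "B*u - A*u^2 \<le> B*u0 - A*u0^2" by linarith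
  qed
qed

lemma GG_quad:
  assumes r1: "\<rho>^2 < 1"
  shows "GG \<rho> a mt s x = (a/2 + (2*mt - \<rho>*(mt+s))/4) * UU \<rho> mt x s
           - ((3 - \<rho>^2)/4) * (UU \<rho> mt x s)^2"
proof -
  define U where "U = UU \<rho> mt x s"
  have m: "(4 - \<rho>^2) * U = 2*(mt+x) - \<rho>*(mt+s)" unfolding U_def by (rule UU_mul[OF r1])
  have xe: "x = ((4 - \<rho>^2) * U - (2*mt - \<rho>*(mt+s)))/2" using m by simp
  show ?thesis unfolding GG_def Let_def U_def[symmetric]
    by (subst xe) (simp add: power2_eq_square field_simps)
qed

lemma UU_surj:
  assumes r1: "\<rho>^2 < 1"
  shows "UU \<rho> mt (((4 - \<rho>^2) * u - (2*mt - \<rho>*(mt+s)))/2) s = u"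
proof -
  have D: "4 - \<rho>^2 \<noteq> 0" using r1 by simp
  have "2*(mt + ((4 - \<rho>^2) * u - (2*mt - \<rho>*(mt+s)))/2) - \<rho>*(mt+s) = (4 - \<rho>^2) * u"
    by (simp add: field_simps)
  thus ?thesis unfolding UU_def using D by simp
qed

lemma best_resp:
  assumes r1: "\<rho>^2 < 1"
  shows "(\<forall>x. GG \<rho> a mt s x \<le> GG \<rho> a mt s r) \<longleftrightarrow>
         UU \<rho> mt r s = (2*a + 2*mt - \<rho>*(mt+s)) / (2*(3 - \<rho>^2))"
proof -
  define A where "A = (3 - \<rho>^2)/4"
  define B where "B = a/2 + (2*mt - \<rho>*(mt+s))/4"
  have A: "A > 0" unfolding A_def using r1 by simp
  have g: "\<And>x. GG \<rho> a mt s x = B * UU \<rho> mt x s - A * (UU \<rho> mt x s)^2"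
    unfolding A_def B_def by (rule GG_quad[OF r1])
  have "(\<forall>x. GG \<rho> a mt s x \<le> GG \<rho> a mt s r) \<longleftrightarrow>
        (\<forall>u. B*u - A*u^2 \<le> B*UU \<rho> mt r s - A*(UU \<rho> mt r s)^2)"
  proof
    assume h: "\<forall>x. GG \<rho> a mt s x \<le> GG \<rho> a mt s r"
    show "\<forall>u. B*u - A*u^2 \<le> B*UU \<rho> mt r s - A*(UU \<rho> mt r s)^2"
    proof
      fix u
      have "GG \<rho> a mt s (((4 - \<rho>^2) * u - (2*mt - \<rho>*(mt+s)))/2) \<le> GG \<rho> a mt s r" using h by blast
      thus "B*u - A*u^2 \<le> B*UU \<rho> mt r s - A*(UU \<rho> mt r s)^2"
        unfolding g UU_surj[OF r1] .
    qed
  next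
    assume h: "\<forall>u. B*u - A*u^2 \<le> B*UU \<rho> mt r s - A*(UU \<rho> mt r s)^2"
    show "\<forall>x. GG \<rho> a mt s x \<le> GG \<rho> a mt s r"
      unfolding g using h by blast
  qed
  also have "\<dots> \<longleftrightarrow> UU \<rho> mt r s = B/(2*A)" by (rule quad_max[OF A])
  also have "B/(2*A) = (2*a + 2*mt - \<rho>*(mt+s)) / (2*(3 - \<rho>^2))"
    unfolding A_def B_def using A_def A by (simp add: field_simps)
  finally show ?thesis .
qed

lemma NE_iff:
  assumes r1: "\<rho>^2 < 1"
  shows "is_funds_NE m a \<rho> mt r2 r3 \<longleftrightarrow>
    UU \<rho> mt r2 r3 = (2*a + 2*mt - \<rho>*(mt+r3)) / (2*(3 - \<rho>^2)) \<and>
    UU \<rho> mt r3 r2 = (2*a + 2*mt - \<rho>*(mt+r2)) / (2*(3 - \<rho>^2))"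
  unfolding is_funds_NE_def util2[OF r1] util3[OF r1] best_resp[OF r1] ..

lemma L_iff:
  assumes r1: "\<rho>^2 < 1"
  shows "UU \<rho> mt p q = (2*a + 2*mt - \<rho>*(mt+q)) / (2*(3 - \<rho>^2)) \<longleftrightarrow>
     (2*(mt+p) - \<rho>*(mt+q)) * (2*(3 - \<rho>^2)) = (2*a + 2*mt - \<rho>*(mt+q)) * (4 - \<rho>^2)"
proof -
  have D: "4 - \<rho>^2 \<noteq> 0" and E: "2*(3 - \<rho>^2) \<noteq> 0" using r1 by auto
  show ?thesis unfolding UU_def using frac_eq_eq[OF D E] .
qed

lemma sol:
  assumes r0: "-1 < \<rho>" and r1: "\<rho> < 1"
  shows "(UU \<rho> mt r2 r3 = (2*a + 2*mt - \<rho>*(mt+r3)) / (2*(3 - \<rho>^2)) \<and>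
    UU \<rho> mt r3 r2 = (2*a + 2*mt - \<rho>*(mt+r2)) / (2*(3 - \<rho>^2))) \<longleftrightarrow>
    r2 = (2*a*(4-\<rho>^2) - (2-\<rho>^2)*(2-\<rho>)*mt) / (4*(3-\<rho>^2) - \<rho>*(2-\<rho>^2)) \<and>
    r3 = (2*a*(4-\<rho>^2) - (2-\<rho>^2)*(2-\<rho>)*mt) / (4*(3-\<rho>^2) - \<rho>*(2-\<rho>^2))"
proof -
  have rr: "\<rho>^2 < 1" using r0 r1 by (simp add: abs_square_less_1)
  define c2 where "c2 = 4*(3-\<rho>^2) - \<rho>*(2-\<rho>^2)"
  define N where "N = 2*a*(4-\<rho>^2) - (2-\<rho>^2)*(2-\<rho>)*mt"
  define c1 where "c1 = 2*(3-\<rho>^2)*(2+\<rho>) - (4-\<rho>^2)*\<rho>"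
  have "\<rho>*(2-\<rho>^2) < 2-\<rho>^2"
    using mult_strict_right_mono[of \<rho> 1 "2-\<rho>^2"] rr r1 by simp
  hence c2pos: "c2 > 0" unfolding c2_def using rr by (smt (verit))
  have c1e: "c1 = (2+\<rho>)*(6 - 2*\<rho> - \<rho>^2)" unfolding c1_def by (simp add: power2_eq_square algebra_simps)
  have c1pos: "c1 > 0" unfolding c1e using rr r0 r1 by (intro mult_pos_pos) auto
  define L where "L = (\<lambda>p q. (2*(mt+p) - \<rho>*(mt+q)) * (2*(3 - \<rho>^2)) - (2*a + 2*mt - \<rho>*(mt+q)) * (4 - \<rho>^2))"
  have Ldiff: "L r2 r3 - L r3 r2 = (r2 - r3) * c1" unfolding L_def c1_def by (simp add: power2_eq_square algebra_simps)
  have Ldiag: "\<And>p. L p p = p * c2 - N" unfolding L_def c2_def N_def by (simp add: power2_eq_square algebra_simps)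
  have iff: "\<And>p q. UU \<rho> mt p q = (2*a + 2*mt - \<rho>*(mt+q)) / (2*(3 - \<rho>^2)) \<longleftrightarrow> L p q = 0"
    unfolding L_def using L_iff[OF rr] by simp
  show ?thesis unfolding iff c2_def[symmetric] N_def[symmetric]
  proof
    assume h: "L r2 r3 = 0 \<and> L r3 r2 = 0"
    hence "(r2 - r3) * c1 = 0" using Ldiff by simp
    hence e: "r3 = r2" using c1pos by simp
    hence "r2 * c2 - N = 0" using h Ldiag by simp
    hence "r2 = N / c2" using c2pos by (simp add: field_simps)
    thus "r2 = N / c2 \<and> r3 = N / c2" using e by simp
  next
    assume h: "r2 = N / c2 \<and> r3 = N / c2"
    have "N / c2 * c2 - N = 0" using c2pos by simp
    thus "L r2 r3 = 0 \<and> L r3 r2 = 0" using h Ldiag by simp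
  qed
qed

lemma formula_eq:
  assumes r0: "-1 < \<rho>" and r1: "\<rho> < 1"
  shows "(a * nuC \<rho> - mt * (1 - nuC \<rho>) * (nuC \<rho> - etaC \<rho>)) / (nuC \<rho> + (1 - nuC \<rho>) * (nuC \<rho> - etaC \<rho>))
     = (2*a*(4-\<rho>^2) - (2-\<rho>^2)*(2-\<rho>)*mt) / (4*(3-\<rho>^2) - \<rho>*(2-\<rho>^2))"
    and "(a * nuC \<rho> - mt / (2 + \<rho>) * (1 - nuC \<rho>)) / (nuC \<rho> * (2 - nuC \<rho>)) /
          (1 - etaC \<rho> * (1 - nuC \<rho>) / (nuC \<rho> * (2 - nuC \<rho>)))
     = (2*a*(4-\<rho>^2) - (2-\<rho>^2)*(2-\<rho>)*mt) / (4*(3-\<rho>^2) - \<rho>*(2-\<rho>^2))"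
proof -
  have rr: "\<rho>^2 < 1" using r0 r1 by (simp add: abs_square_less_1)
  define D where "D = 4 - \<rho>^2"
  define E where "E = 3 - \<rho>^2"
  define c2 where "c2 = 4*(3-\<rho>^2) - \<rho>*(2-\<rho>^2)"
  have "\<rho>*(2-\<rho>^2) < 2-\<rho>^2"
    using mult_strict_right_mono[of \<rho> 1 "2-\<rho>^2"] rr r1 by simp
  hence c2pos: "c2 > 0" unfolding c2_def using rr by (smt (verit))
  have Dp: "D > 0" and Ep: "E > 0" unfolding D_def E_def using rr by auto
  have p: "2 + \<rho> > 0" "2 - \<rho> > 0" using r0 r1 by auto
  have Df: "D = (2-\<rho>)*(2+\<rho>)" unfolding D_def by (simp add: power2_eq_square algebra_simps)
  have q1: "1/(2-\<rho>) * ((2-\<rho>)*(2+\<rho>)) = 2+\<rho>" using p by simp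
  have q2: "1/(2+\<rho>) * ((2-\<rho>)*(2+\<rho>)) = 2-\<rho>" using p by simp
  have nu0: "nuC \<rho> * ((2-\<rho>)*(2+\<rho>)) = 2"
  proof -
    have "nuC \<rho> * ((2-\<rho>)*(2+\<rho>)) = (1/(2-\<rho>) * ((2-\<rho>)*(2+\<rho>)) + 1/(2+\<rho>) * ((2-\<rho>)*(2+\<rho>)))/2"
      unfolding nuC_def by (simp only: distrib_right times_divide_eq_left)
    thus ?thesis unfolding q1 q2 by simp
  qed
  have eta0: "etaC \<rho> * ((2-\<rho>)*(2+\<rho>)) = \<rho>"
  proof -
    have "etaC \<rho> * ((2-\<rho>)*(2+\<rho>)) = (1/(2-\<rho>) * ((2-\<rho>)*(2+\<rho>)) - 1/(2+\<rho>) * ((2-\<rho>)*(2+\<rho>)))/2"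
      unfolding etaC_def by (simp only: left_diff_distrib times_divide_eq_left)
    thus ?thesis unfolding q1 q2 by simp
  qed
  have nu: "nuC \<rho> = 2 / D" using nu0 Dp unfolding Df[symmetric] by (simp add: eq_divide_eq)
  have eta: "etaC \<rho> = \<rho> / D" using eta0 Dp unfolding Df[symmetric] by (simp add: eq_divide_eq)
  have h1: "1 - nuC \<rho> = (2 - \<rho>^2) / D" unfolding nu D_def using Dp D_def by (simp add: field_simps)
  have h2: "nuC \<rho> - etaC \<rho> = (2 - \<rho>) / D" unfolding nu eta using Dp by (simp add: field_simps)
  have h3: "nuC \<rho> * (2 - nuC \<rho>) = 4 * E / D^2" unfolding nu E_def using Dp D_def
    by (simp add: field_simps power2_eq_square)
  have n1: "a * nuC \<rho> - mt * (1 - nuC \<rho>) * (nuC \<rho> - etaC \<rho>) = (2*a*(4-\<rho>^2) - (2-\<rho>^2)*(2-\<rho>)*mt) / D^2"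
    unfolding h1 h2 unfolding nu using Dp by (simp add: field_simps) (simp add: D_def power2_eq_square algebra_simps)
  have d1: "nuC \<rho> + (1 - nuC \<rho>) * (nuC \<rho> - etaC \<rho>) = c2 / D^2"
    unfolding h1 h2 unfolding nu c2_def using Dp by (simp add: field_simps) (simp add: D_def power2_eq_square algebra_simps)
  show "(a * nuC \<rho> - mt * (1 - nuC \<rho>) * (nuC \<rho> - etaC \<rho>)) / (nuC \<rho> + (1 - nuC \<rho>) * (nuC \<rho> - etaC \<rho>))
     = (2*a*(4-\<rho>^2) - (2-\<rho>^2)*(2-\<rho>)*mt) / (4*(3-\<rho>^2) - \<rho>*(2-\<rho>^2))"
    unfolding n1 d1 c2_def[symmetric] using Dp c2pos by (simp add: field_simps)
  have n2: "a * nuC \<rho> - mt / (2 + \<rho>) * (1 - nuC \<rho>) = (2*a*(2+\<rho>) - mt*(2-\<rho>^2)) / ((2+\<rho>)*D)"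
  proof -
    have nuD: "nuC \<rho> * D = 2" using nu Dp by simp
    have h1D: "(1 - nuC \<rho>) * D = 2 - \<rho>^2" using h1 Dp by simp
    have "(a * nuC \<rho> - mt / (2 + \<rho>) * (1 - nuC \<rho>)) * ((2+\<rho>)*D)
        = a*(2+\<rho>)*(nuC \<rho> * D) - (mt / (2 + \<rho>) * (2+\<rho>)) * ((1 - nuC \<rho>) * D)"
      by (simp add: algebra_simps)
    also have "\<dots> = 2*a*(2+\<rho>) - mt*(2-\<rho>^2)" unfolding nuD h1D using p by simp
    finally show ?thesis using Dp p by (simp add: eq_divide_eq)
  qed
  have s1: "1 - etaC \<rho> * (1 - nuC \<rho>) / (nuC \<rho> * (2 - nuC \<rho>)) = c2 / (4*E)"
    unfolding h1 h3 eta c2_def E_def using Dp Ep E_def by (simp add: field_simps power2_eq_square)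
  show "(a * nuC \<rho> - mt / (2 + \<rho>) * (1 - nuC \<rho>)) / (nuC \<rho> * (2 - nuC \<rho>)) /
          (1 - etaC \<rho> * (1 - nuC \<rho>) / (nuC \<rho> * (2 - nuC \<rho>)))
     = (2*a*(4-\<rho>^2) - (2-\<rho>^2)*(2-\<rho>)*mt) / (4*(3-\<rho>^2) - \<rho>*(2-\<rho>^2))"
  proof -
    define Q where "Q = 2*a*(2+\<rho>) - mt*(2-\<rho>^2)"
    have aux: "\<And>P D E c Q::real. P\<noteq>0 \<Longrightarrow> D\<noteq>0 \<Longrightarrow> E\<noteq>0 \<Longrightarrow> c\<noteq>0 \<Longrightarrow>
        (Q/(P*D))/(4*E/D^2)/(c/(4*E)) = Q*D/(P*c)"
      by (simp add: field_simps power2_eq_square)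
    have "Q*D/((2+\<rho>)*c2) = Q*(2-\<rho>)/c2" unfolding Df using p by simp
    also have "Q*(2-\<rho>) = 2*a*(4-\<rho>^2) - (2-\<rho>^2)*(2-\<rho>)*mt"
      unfolding Q_def by (simp add: power2_eq_square algebra_simps)
    finally have fin: "Q*D/((2+\<rho>)*c2) = (2*a*(4-\<rho>^2) - (2-\<rho>^2)*(2-\<rho>)*mt) / c2" .
    show ?thesis
      unfolding s1 unfolding n2 h3 c2_def[symmetric] Q_def[symmetric]
      using aux[of "2+\<rho>" D E c2 Q] Dp Ep c2pos p fin by simp
  qed
qed

theorem mainTheorem13:
  fixes m a \<rho> mt :: real
  assumes "-1 < \<rho>" and "\<rho> < 1"
  shows "let \<nu> = nuC \<rho>; \<eta> = etaC \<rho>; \<alpha> = mt / (2 + \<rho>);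
             c = (a * \<nu> - \<alpha> * (1 - \<nu>)) / (\<nu> * (2 - \<nu>));
             s = \<eta> * (1 - \<nu>) / (\<nu> * (2 - \<nu>));
             x = c / (1 - s)
         in x = (a * \<nu> - mt * (1 - \<nu>) * (\<nu> - \<eta>)) / (\<nu> + (1 - \<nu>) * (\<nu> - \<eta>))
            \<and> {(r2, r3). is_funds_NE m a \<rho> mt r2 r3} = {(x, x)}"
proof -
  have rr: "\<rho>^2 < 1" using assms by (simp add: abs_square_less_1)
  note F = formula_eq[OF assms, of a mt]
  show ?thesis unfolding Let_def F
    using NE_iff[OF rr] sol[OF assms] by auto
qed

end
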